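(* Let $n\ge1$, let $\{b_{ij}:1\le j\le i\le n\}$ be real scalars with $b_{ij}:=b_{ji}$ for $i<j$, let $\{g_{ij}:i\ge j\}$ be i.i.d. $N(0,1)$, and let $X$ be the $n\times n$ symmetric matrix with $X_{ij}=X_{ji}=g_{ij}b_{ij}$ ($i\ge j$). Let $\sigma:=\max_i\sqrt{\sum_j b_{ij}^2}$ and $\sigma_*:=\max_{ij}|b_{ij}|$, and suppose $\sigma_*\le 1$. For each positive integer $r$, let $Y_r$ be the $r\times r$ symmetric random matrix such that $\{(Y_r)_{ij}:i\ge j\}$ are independent $N(0,1)$ random variables. Then for every positive integer $p$, $$\mathbb{E}\operatorname{Tr}[X^{2p}]\le \frac{n}{\lceil\sigma^2\rceil+p}\,\mathbb{E}\operatorname{Tr}\Big[Y_{\lceil\sigma^2\rceil+p}^{2p}\Big].$$ *)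

theory Defs
  imports "HOL-Probability.Probability" "Jordan_Normal_Form.Matrix"
begin

definition std_gaussian :: "real measure" where
  "std_gaussian = density lborel std_normal_density"

text \<open>Index set of the lower triangle (including the diagonal) of an n x n matrix,
  0-based: pairs (i,j) with j \<le> i < n.\<close>
definition lower_idx :: "nat \<Rightarrow> (nat \<times> nat) set" where
  "lower_idx n = {(i, j). j \<le> i \<and> i < n}"

definition gauss_family :: "nat \<Rightarrow> ((nat \<times> nat) \<Rightarrow> real) measure" where
  "gauss_family n = PiM (lower_idx n) (\<lambda>_. std_gaussian)"

definition sym_gauss_mat :: "nat \<Rightarrow> (nat \<Rightarrow> nat \<Rightarrow> real) \<Rightarrow> ((nat \<times> nat) \<Rightarrow> real) \<Rightarrow> real mat" where
  "sym_gauss_mat n b g = mat n n (\<lambda>(i, j). if j \<le> i then g (i, j) * b i j else g (j, i) * b j i)"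

definition mtrace :: "real mat \<Rightarrow> real" where
  "mtrace A = (\<Sum>i<dim_row A. A $$ (i, i))"

definition GOE_like :: "nat \<Rightarrow> ((nat \<times> nat) \<Rightarrow> real) \<Rightarrow> real mat" where
  "GOE_like r g = sym_gauss_mat r (\<lambda>_ _. 1) g"

end

theory Submission
  imports Defs
begin

definition lists_len :: "nat \<Rightarrow> nat \<Rightarrow> nat list set" where
  "lists_len k N = {xs. length xs = k \<and> set xs \<subseteq> {..<N}}"

lemma finite_lists_len[simp]: "finite (lists_len k N)"
  unfolding lists_len_def
  using finite_lists_length_eq[of "{..<N}" k] by (simp add: conj_commute)

lemma sum_lists_len_snoc:
  "(\<Sum>xs\<in>lists_len (Suc k) N. f xs) = (\<Sum>xs\<in>lists_len k N. \<Sum>x<N. f (xs @ [x]))"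
proof -
  have "(\<Sum>xs\<in>lists_len (Suc k) N. f xs) = (\<Sum>(xs,x)\<in>lists_len k N \<times> {..<N}. f (xs @ [x]))"
    apply (rule sum.reindex_bij_witness[of _ "\<lambda>(xs,x). xs @ [x]" "\<lambda>ys. (butlast ys, last ys)"])
    apply (auto simp: lists_len_def)
    apply (case_tac [!] a rule: rev_cases)
    apply auto
    done
  also have "\<dots> = (\<Sum>xs\<in>lists_len k N. \<Sum>x<N. f (xs @ [x]))"
    by (simp add: sum.cartesian_product)
  finally show ?thesis .
qed

lemma sum_lists_len_Cons:
  "(\<Sum>xs\<in>lists_len (Suc k) N. f xs) = (\<Sum>x<N. \<Sum>xs\<in>lists_len k N. f (x # xs))"
proof -
  have "(\<Sum>xs\<in>lists_len (Suc k) N. f xs) = (\<Sum>(x,xs)\<in>{..<N} \<times> lists_len k N. f (x # xs))"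
    apply (rule sum.reindex_bij_witness[of _ "\<lambda>(x,xs). x # xs" "\<lambda>ys. (hd ys, tl ys)"])
    apply (auto simp: lists_len_def)
    apply (case_tac [!] a)
    apply auto
    done
  also have "\<dots> = (\<Sum>x<N. \<Sum>xs\<in>lists_len k N. f (x # xs))"
    by (simp add: sum.cartesian_product)
  finally show ?thesis .
qed

definition pathw :: "real mat \<Rightarrow> nat list \<Rightarrow> real" where
  "pathw A vs = (\<Prod>t<length vs - 1. A $$ (vs ! t, vs ! Suc t))"

lemma pathw_snoc: "vs \<noteq> [] \<Longrightarrow> pathw A (vs @ [x]) = pathw A vs * A $$ (last vs, x)"
proof -
  assume ne: "vs \<noteq> []"
  then obtain m where m: "length vs = Suc m" by (cases vs) auto
  have "pathw A (vs @ [x]) = (\<Prod>t<Suc m. A $$ ((vs @ [x]) ! t, (vs @ [x]) ! Suc t))"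
    unfolding pathw_def using m by simp
  also have "\<dots> = (\<Prod>t<m. A $$ ((vs @ [x]) ! t, (vs @ [x]) ! Suc t)) * A $$ (vs ! m, x)"
    using m by (simp add: nth_append)
  also have "(\<Prod>t<m. A $$ ((vs @ [x]) ! t, (vs @ [x]) ! Suc t)) = pathw A vs"
    unfolding pathw_def using m by (intro prod.cong) (auto simp: nth_append)
  also have "vs ! m = last vs" using m ne by (simp add: last_conv_nth)
  finally show ?thesis .
qed

lemma sum_ind_aux:
  fixes f g :: "nat \<Rightarrow> real"
  assumes "a < N"
  shows "(\<Sum>y<N. c * (if a = y then 1 else 0) * g y) = c * g a"
proof -
  have "(\<Sum>y<N. c * (if a = y then 1 else 0) * g y) = (\<Sum>y<N. if a = y then c * g y else 0)"
    by (intro sum.cong) auto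
  also have "\<dots> = c * g a" using assms by auto
  finally show ?thesis .
qed

lemma sum_ind_aux2:
  fixes g :: "nat \<Rightarrow> real"
  assumes "j < N"
  shows "(\<Sum>x<N. g x * (if x = j then 1 else 0)) = g j"
proof -
  have "(\<Sum>x<N. g x * (if x = j then 1 else 0)) = (\<Sum>x<N. if j = x then g x else 0)"
    by (intro sum.cong) auto
  also have "\<dots> = g j" using assms by auto
  finally show ?thesis .
qed

lemma pow_expand:
  assumes A: "A \<in> carrier_mat N N" and i: "i < N" and j: "j < N"
  shows "(A ^\<^sub>m k) $$ (i, j) = (\<Sum>xs\<in>lists_len k N. pathw A (i # xs) * (if last (i # xs) = j then 1 else 0))"
  using j
proof (induction k arbitrary: j)
  case 0
  have "lists_len 0 N = {[]}" unfolding lists_len_def by auto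
  then show ?case using A i 0 by (simp add: pathw_def)
next
  case (Suc k)
  have "(A ^\<^sub>m Suc k) $$ (i, j) = (\<Sum>y<N. (A ^\<^sub>m k) $$ (i, y) * A $$ (y, j))"
    using A i Suc.prems by (simp add: scalar_prod_def lessThan_atLeast0)
  also have "\<dots> = (\<Sum>y<N. \<Sum>xs\<in>lists_len k N. pathw A (i # xs) * (if last (i # xs) = y then 1 else 0) * A $$ (y, j))"
    by (simp add: Suc.IH sum_distrib_right)
  also have "\<dots> = (\<Sum>xs\<in>lists_len k N. \<Sum>y<N. pathw A (i # xs) * (if last (i # xs) = y then 1 else 0) * A $$ (y, j))"
    by (rule sum.swap)
  also have "\<dots> = (\<Sum>xs\<in>lists_len k N. pathw A (i # xs) * A $$ (last (i # xs), j))"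
  proof (rule sum.cong[OF refl])
    fix xs assume "xs \<in> lists_len k N"
    moreover have "last (i # xs) \<in> set (i # xs)" by (rule last_in_set) simp
    ultimately have "last (i # xs) < N" using i unfolding lists_len_def by auto
    then show "(\<Sum>y<N. pathw A (i # xs) * (if last (i # xs) = y then 1 else 0) * A $$ (y, j)) =
      pathw A (i # xs) * A $$ (last (i # xs), j)"
      by (rule sum_ind_aux)
  qed
  also have "\<dots> = (\<Sum>xs\<in>lists_len k N. \<Sum>x<N. pathw A (i # xs @ [x]) * (if last (i # xs @ [x]) = j then 1 else 0))"
  proof (rule sum.cong[OF refl])
    fix xs assume "xs \<in> lists_len k N"
    show "pathw A (i # xs) * A $$ (last (i # xs), j) =
      (\<Sum>x<N. pathw A (i # xs @ [x]) * (if last (i # xs @ [x]) = j then 1 else 0))"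
    proof -
      have e: "\<And>x. pathw A (i # xs @ [x]) = pathw A (i # xs) * A $$ (last (i # xs), x)"
        using pathw_snoc[of "i # xs" A] by simp
      have "(\<Sum>x<N. pathw A (i # xs @ [x]) * (if last (i # xs @ [x]) = j then 1 else 0))
         = (\<Sum>x<N. (pathw A (i # xs) * A $$ (last (i # xs), x)) * (if x = j then 1 else 0))"
        by (intro sum.cong refl) (simp only: e last_appendR last_ConsR append_Cons, simp)
      also have "\<dots> = pathw A (i # xs) * A $$ (last (i # xs), j)"
        by (rule sum_ind_aux2[OF Suc.prems])
      finally show ?thesis by simp
    qed
  qed
  also have "\<dots> = (\<Sum>xs\<in>lists_len (Suc k) N. pathw A (i # xs) * (if last (i # xs) = j then 1 else 0))"
    by (simp add: sum_lists_len_snoc)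
  finally show ?case .
qed

definition cycw :: "real mat \<Rightarrow> nat list \<Rightarrow> real" where
  "cycw A ys = (\<Prod>t<length ys. A $$ (ys ! t, ys ! (Suc t mod length ys)))"

lemma trace_expand:
  assumes A: "A \<in> carrier_mat N N" and L: "L \<ge> 1"
  shows "mtrace (A ^\<^sub>m L) = (\<Sum>ys\<in>lists_len L N. cycw A ys)"
proof -
  obtain K where K: "L = Suc K" using L by (cases L) auto
  have "mtrace (A ^\<^sub>m L) = (\<Sum>i<N. (A ^\<^sub>m L) $$ (i, i))"
    using A unfolding mtrace_def by simp
  also have "\<dots> = (\<Sum>i<N. \<Sum>xs\<in>lists_len K N. \<Sum>x<N. pathw A (i # xs @ [x]) * (if last (i # xs @ [x]) = i then 1 else 0))"
  proof -
    have "(\<Sum>i<N. (A ^\<^sub>m L) $$ (i, i)) = (\<Sum>i<N. \<Sum>xs\<in>lists_len L N. pathw A (i # xs) * (if last (i # xs) = i then 1 else 0))"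
      by (intro sum.cong refl pow_expand[OF A]) auto
    then show ?thesis by (simp only: K sum_lists_len_snoc)
  qed
  also have "\<dots> = (\<Sum>i<N. \<Sum>xs\<in>lists_len K N. pathw A (i # xs @ [i]))"
  proof (intro sum.cong refl)
    fix i xs assume i: "i \<in> {..<N}"
    have "(\<Sum>x<N. pathw A (i # xs @ [x]) * (if last (i # xs @ [x]) = i then 1 else 0))
       = (\<Sum>x<N. pathw A (i # xs @ [x]) * (if x = i then 1 else 0))"
      by (intro sum.cong refl) simp
    also have "\<dots> = pathw A (i # xs @ [i])"
      using i by (intro sum_ind_aux2) simp
    finally show "(\<Sum>x<N. pathw A (i # xs @ [x]) * (if last (i # xs @ [x]) = i then 1 else 0)) = pathw A (i # xs @ [i])" .
  qed
  also have "\<dots> = (\<Sum>i<N. \<Sum>xs\<in>lists_len K N. cycw A (i # xs))"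
  proof (intro sum.cong refl)
    fix i xs
    show "pathw A (i # xs @ [i]) = cycw A (i # xs)"
      unfolding pathw_def cycw_def
    proof (rule prod.cong)
      show "{..<length (i # xs @ [i]) - 1} = {..<length (i # xs)}" by simp
    next
      fix t assume "t \<in> {..<length (i # xs)}"
      then have t: "t \<le> length xs" by simp
      show "A $$ ((i # xs @ [i]) ! t, (i # xs @ [i]) ! Suc t) = A $$ ((i # xs) ! t, (i # xs) ! (Suc t mod length (i # xs)))"
      proof (cases "t = length xs")
        case True
        have "(i # xs @ [i]) ! t = ((i # xs) @ [i]) ! t" by simp
        also have "\<dots> = (i # xs) ! t" using True by (simp only: nth_append) simp
        finally show ?thesis using True by simp
      next
        case False
        with t have "t < length xs" by simp
        then show ?thesis by (cases t) (auto simp: nth_append)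
      qed
    qed
  qed
  also have "\<dots> = (\<Sum>ys\<in>lists_len L N. cycw A ys)"
    by (simp add: K sum_lists_len_Cons)
  finally show ?thesis .
qed


definition ordp :: "nat \<Rightarrow> nat \<Rightarrow> nat \<times> nat" where
  "ordp a b = (max a b, min a b)"

definition ed :: "nat list \<Rightarrow> nat \<Rightarrow> nat \<times> nat" where
  "ed ys t = ordp (ys ! t) (ys ! (Suc t mod length ys))"

definition cnt :: "nat list \<Rightarrow> nat \<times> nat \<Rightarrow> nat" where
  "cnt ys e = card {t. t < length ys \<and> ed ys t = e}"

definition mom :: "nat \<Rightarrow> real" where
  "mom k = (\<integral>x. x ^ k \<partial>std_gaussian)"

definition Bp :: "(nat \<Rightarrow> nat \<Rightarrow> real) \<Rightarrow> nat list \<Rightarrow> real" where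
  "Bp b ys = (\<Prod>t<length ys. b (ys ! t) (ys ! (Suc t mod length ys)))"

definition Wt :: "nat list \<Rightarrow> real" where
  "Wt ys = (\<Prod>e\<in>ed ys ` {..<length ys}. mom (cnt ys e))"

lemma ordp_sym: "ordp a b = ordp b a"
  unfolding ordp_def by (simp add: max.commute min.commute)

lemma lists_len_nth: "ys \<in> lists_len L N \<Longrightarrow> t < L \<Longrightarrow> ys ! t < N"
  unfolding lists_len_def by (auto simp: subset_iff)

lemma ed_in_lower: "ys \<in> lists_len L N \<Longrightarrow> t < L \<Longrightarrow> ed ys t \<in> lower_idx N"
proof -
  assume ys: "ys \<in> lists_len L N" and t: "t < L"
  then have L: "length ys = L" unfolding lists_len_def by simp
  have "Suc t mod L < L" using t by simp
  then have "ys ! (Suc t mod length ys) < N" using ys L lists_len_nth by metis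
  moreover have "ys ! t < N" using ys t lists_len_nth by metis
  ultimately show ?thesis unfolding ed_def ordp_def lower_idx_def by auto
qed

lemma cycw_X:
  assumes ys: "ys \<in> lists_len L N" and bs: "\<And>i j. i < N \<Longrightarrow> j < N \<Longrightarrow> b i j = b j i"
  shows "cycw (sym_gauss_mat N b g) ys = Bp b ys * (\<Prod>t<L. g (ed ys t))"
proof -
  have L: "length ys = L" using ys unfolding lists_len_def by simp
  have "cycw (sym_gauss_mat N b g) ys = (\<Prod>t<L. b (ys ! t) (ys ! (Suc t mod L)) * g (ed ys t))"
    unfolding cycw_def L
  proof (rule prod.cong[OF refl])
    fix t assume t: "t \<in> {..<L}"
    have "Suc t mod L < L" using t by simp
    then have j: "ys ! (Suc t mod L) < N" using ys lists_len_nth by metis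
    have i: "ys ! t < N" using ys t lists_len_nth by auto
    show "sym_gauss_mat N b g $$ (ys ! t, ys ! (Suc t mod L)) = b (ys ! t) (ys ! (Suc t mod L)) * g (ed ys t)"
      unfolding sym_gauss_mat_def ed_def ordp_def L using i j bs[OF i j]
      by (auto simp: max_def min_def)
  qed
  also have "\<dots> = Bp b ys * (\<Prod>t<L. g (ed ys t))"
    unfolding Bp_def L by (rule prod.distrib)
  finally show ?thesis .
qed

lemma prod_group_edges:
  assumes ys: "ys \<in> lists_len L N"
  shows "(\<Prod>t<L. g (ed ys t)) = (\<Prod>e\<in>lower_idx N. g e ^ cnt ys e)"
proof -
  have L: "length ys = L" using ys unfolding lists_len_def by simp
  have "(\<Prod>t<L. g (ed ys t)) = (\<Prod>e\<in>ed ys ` {..<L}. \<Prod>t\<in>{t. t \<in> {..<L} \<and> ed ys t = e}. g (ed ys t))"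
    by (rule prod.image_gen) simp
  also have "\<dots> = (\<Prod>e\<in>ed ys ` {..<L}. g e ^ cnt ys e)"
  proof (rule prod.cong[OF refl])
    fix e assume "e \<in> ed ys ` {..<L}"
    have "(\<Prod>t\<in>{t. t \<in> {..<L} \<and> ed ys t = e}. g (ed ys t)) = (\<Prod>t\<in>{t. t \<in> {..<L} \<and> ed ys t = e}. g e)"
      by (rule prod.cong) auto
    also have "\<dots> = g e ^ card {t. t \<in> {..<L} \<and> ed ys t = e}" by simp
    also have "{t. t \<in> {..<L} \<and> ed ys t = e} = {t. t < length ys \<and> ed ys t = e}" using L by auto
    finally show "(\<Prod>t\<in>{t. t \<in> {..<L} \<and> ed ys t = e}. g (ed ys t)) = g e ^ cnt ys e"
      unfolding cnt_def by (simp add: L)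
  qed
  also have "\<dots> = (\<Prod>e\<in>lower_idx N. g e ^ cnt ys e)"
  proof (rule prod.mono_neutral_left)
    show "finite (lower_idx N)"
      by (rule finite_subset[of _ "{..<N} \<times> {..<N}"]) (auto simp: lower_idx_def)
    show "ed ys ` {..<L} \<subseteq> lower_idx N" using ed_in_lower[OF ys] by auto
    show "\<forall>i\<in>lower_idx N - ed ys ` {..<L}. g i ^ cnt ys i = 1"
    proof
      fix e assume "e \<in> lower_idx N - ed ys ` {..<L}"
      then have "{t. t < length ys \<and> ed ys t = e} = {}" using L by auto
      then have "cnt ys e = 0" unfolding cnt_def by (simp only: card.empty)
      then show "g e ^ cnt ys e = 1" by simp
    qed
  qed
  finally show ?thesis .
qed

lemma finite_lower_idx[simp]: "finite (lower_idx N)"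
  by (rule finite_subset[of _ "{..<N} \<times> {..<N}"]) (auto simp: lower_idx_def)

lemma prob_space_std_gaussian: "prob_space std_gaussian"
  unfolding std_gaussian_def by (rule prob_space_normal_density) simp

lemma integrable_gauss_pow: "integrable std_gaussian (\<lambda>x. x ^ k)"
  unfolding std_gaussian_def
  by (subst integrable_density) (auto simp: integrable_std_normal_moment)

lemma mom_lborel: "mom k = (\<integral>x. std_normal_density x * x ^ k \<partial>lborel)"
  unfolding mom_def std_gaussian_def
  using integral_density[of "\<lambda>x. x^k" lborel std_normal_density] by simp

lemma mom_even: "mom (2 * k) = fact (2 * k) / (2 ^ k * fact k)"
  unfolding mom_lborel by (rule integral_std_normal_moment_even)

lemma mom_odd: "odd k \<Longrightarrow> mom k = 0"
proof -
  assume "odd k"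
  then obtain j where "k = 2 * j + 1" by (elim oddE)
  then show ?thesis using integral_std_normal_moment_odd[of j] by (simp add: mom_lborel)
qed

lemma mom_0: "mom 0 = 1"
  using mom_even[of 0] by simp

lemma mom_nonneg: "mom k \<ge> 0"
proof (cases "even k")
  case True
  then obtain j where "k = 2 * j" by (elim evenE)
  then show ?thesis by (simp add: mom_even)
next
  case False then show ?thesis by (simp add: mom_odd)
qed

lemma mom_nz_even: "mom k \<noteq> 0 \<Longrightarrow> even k"
  using mom_odd by blast

interpretation gp: product_sigma_finite "\<lambda>_. std_gaussian"
  unfolding product_sigma_finite_def
  using prob_space_imp_sigma_finite[OF prob_space_std_gaussian] by simp

lemma integral_edges:
  "(\<integral>g. (\<Prod>e\<in>lower_idx N. g e ^ c e) \<partial>gauss_family N) = (\<Prod>e\<in>lower_idx N. mom (c e))"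
  unfolding gauss_family_def mom_def
  using gp.product_integral_prod[where I="lower_idx N" and f="\<lambda>e x. x ^ c e"] integrable_gauss_pow
  by simp

lemma integrable_edges:
  "integrable (gauss_family N) (\<lambda>g. (\<Prod>e\<in>lower_idx N. g e ^ c e))"
  unfolding gauss_family_def
  using gp.product_integrable_prod[where I="lower_idx N" and f="\<lambda>e x. x ^ c e"] integrable_gauss_pow
  by simp

lemma Wt_lower:
  assumes ys: "ys \<in> lists_len L N"
  shows "(\<Prod>e\<in>lower_idx N. mom (cnt ys e)) = Wt ys"
proof -
  have L: "length ys = L" using ys unfolding lists_len_def by simp
  show ?thesis unfolding Wt_def
  proof (rule prod.mono_neutral_right)
    show "finite (lower_idx N)" by simp
    show "ed ys ` {..<length ys} \<subseteq> lower_idx N" using ed_in_lower[OF ys] L by auto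
    show "\<forall>i\<in>lower_idx N - ed ys ` {..<length ys}. mom (cnt ys i) = 1"
    proof
      fix e assume "e \<in> lower_idx N - ed ys ` {..<length ys}"
      then have "{t. t < length ys \<and> ed ys t = e} = {}" by auto
      then have "cnt ys e = 0" unfolding cnt_def by (simp only: card.empty)
      then show "mom (cnt ys e) = 1" by (simp add: mom_0)
    qed
  qed
qed

lemma expectation_expand:
  assumes L: "L \<ge> 1" and bs: "\<And>i j. i < N \<Longrightarrow> j < N \<Longrightarrow> b i j = b j i"
  shows "(\<integral>g. mtrace (sym_gauss_mat N b g ^\<^sub>m L) \<partial>gauss_family N) = (\<Sum>ys\<in>lists_len L N. Bp b ys * Wt ys)"
proof -
  have eq: "(\<lambda>g. mtrace (sym_gauss_mat N b g ^\<^sub>m L)) =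
    (\<lambda>g. \<Sum>ys\<in>lists_len L N. Bp b ys * (\<Prod>e\<in>lower_idx N. g e ^ cnt ys e))"
  proof
    fix g
    have X: "sym_gauss_mat N b g \<in> carrier_mat N N" unfolding sym_gauss_mat_def by simp
    show "mtrace (sym_gauss_mat N b g ^\<^sub>m L) = (\<Sum>ys\<in>lists_len L N. Bp b ys * (\<Prod>e\<in>lower_idx N. g e ^ cnt ys e))"
      unfolding trace_expand[OF X L]
      by (intro sum.cong refl) (simp add: cycw_X[OF _ bs] prod_group_edges)
  qed
  have "(\<integral>g. (\<Sum>ys\<in>lists_len L N. Bp b ys * (\<Prod>e\<in>lower_idx N. g e ^ cnt ys e)) \<partial>gauss_family N)
     = (\<Sum>ys\<in>lists_len L N. \<integral>g. Bp b ys * (\<Prod>e\<in>lower_idx N. g e ^ cnt ys e) \<partial>gauss_family N)"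
    by (rule Bochner_Integration.integral_sum[where I="lists_len L N" and M="gauss_family N" and f="\<lambda>ys g. Bp b ys * (\<Prod>e\<in>lower_idx N. g e ^ cnt ys e)"]) (auto intro: integrable_edges)
  also have "\<dots> = (\<Sum>ys\<in>lists_len L N. Bp b ys * Wt ys)"
    by (intro sum.cong refl) (simp add: integral_edges Wt_lower)
  finally show ?thesis unfolding eq .
qed


fun idx :: "nat list \<Rightarrow> nat \<Rightarrow> nat" where
  "idx [] x = 0"
| "idx (y # ys) x = (if y = x then 0 else Suc (idx ys x))"

lemma idx_lt: "x \<in> set ds \<Longrightarrow> idx ds x < length ds"
  by (induction ds) auto

lemma nth_idx: "x \<in> set ds \<Longrightarrow> ds ! idx ds x = x"
  by (induction ds) auto

lemma idx_nth: "distinct ds \<Longrightarrow> i < length ds \<Longrightarrow> idx ds (ds ! i) = i"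
proof (induction ds arbitrary: i)
  case Nil then show ?case by simp
next
  case (Cons y ys)
  then show ?case by (cases i) (auto simp: nth_mem)
qed

definition cstep :: "nat list \<times> nat list \<Rightarrow> nat \<Rightarrow> nat list \<times> nat list" where
  "cstep sd x = (if x \<in> set (snd sd) then (fst sd @ [idx (snd sd) x], snd sd)
                 else (fst sd @ [length (snd sd)], snd sd @ [x]))"

definition cf :: "nat list \<Rightarrow> nat list \<times> nat list" where
  "cf xs = foldl cstep ([], []) xs"

lemma cf_Nil[simp]: "cf [] = ([], [])" unfolding cf_def by simp

lemma cf_snoc: "cf (xs @ [x]) = cstep (cf xs) x" unfolding cf_def by simp

definition prefix_ok :: "nat list \<Rightarrow> bool" where
  "prefix_ok s \<longleftrightarrow> (\<forall>j \<le> length s. set (take j s) = {..<card (set (take j s))})"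

lemma cf_inv:
  "length (fst (cf xs)) = length xs \<and> distinct (snd (cf xs)) \<and> set (snd (cf xs)) = set xs \<and>
   map (\<lambda>i. snd (cf xs) ! i) (fst (cf xs)) = xs \<and> set (fst (cf xs)) = {..<length (snd (cf xs))} \<and>
   prefix_ok (fst (cf xs))"
proof (induction xs rule: rev_induct)
  case Nil then show ?case by (simp add: prefix_ok_def)
next
  case (snoc x xs)
  obtain s ds where sd: "cf xs = (s, ds)" by force
  from snoc sd have len: "length s = length xs" and dist: "distinct ds" and st: "set ds = set xs"
    and mp: "map (\<lambda>i. ds ! i) s = xs" and ss: "set s = {..<length ds}" and po: "prefix_ok s" by auto
  show ?case
  proof (cases "x \<in> set ds")
    case True
    have c: "cf (xs @ [x]) = (s @ [idx ds x], ds)" by (simp add: cf_snoc sd cstep_def True)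
    have lt: "idx ds x < length ds" using True by (rule idx_lt)
    have po': "prefix_ok (s @ [idx ds x])"
      unfolding prefix_ok_def
    proof (intro allI impI)
      fix j assume j: "j \<le> length (s @ [idx ds x])"
      show "set (take j (s @ [idx ds x])) = {..<card (set (take j (s @ [idx ds x])))}"
      proof (cases "j \<le> length s")
        case True then show ?thesis using po unfolding prefix_ok_def by simp
      next
        case False
        then have jj: "j = length (s @ [idx ds x])" using j by simp
        have "set (take j (s @ [idx ds x])) = insert (idx ds x) (set s)" unfolding jj by simp
        also have "\<dots> = {..<length ds}" unfolding ss using lt by auto
        finally show ?thesis by simp
      qed
    qed
    have m1: "map (\<lambda>i. ds ! i) (s @ [idx ds x]) = xs @ [x]" using mp nth_idx[OF True] by simp
    have s1: "set (s @ [idx ds x]) = {..<length ds}" using ss lt by auto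
    have s2: "set ds = set (xs @ [x])" using st True by auto
    show ?thesis unfolding c fst_conv snd_conv using len dist m1 s1 s2 po' by simp
  next
    case False
    have c: "cf (xs @ [x]) = (s @ [length ds], ds @ [x])" by (simp add: cf_snoc sd cstep_def False)
    have po': "prefix_ok (s @ [length ds])"
      unfolding prefix_ok_def
    proof (intro allI impI)
      fix j assume j: "j \<le> length (s @ [length ds])"
      show "set (take j (s @ [length ds])) = {..<card (set (take j (s @ [length ds])))}"
      proof (cases "j \<le> length s")
        case True then show ?thesis using po unfolding prefix_ok_def by simp
      next
        case False
        then have jj: "j = length (s @ [length ds])" using j by simp
        have "take j (s @ [length ds]) = s @ [length ds]" by (rule take_all) (simp only: jj order_refl)
        then have "set (take j (s @ [length ds])) = insert (length ds) (set s)" by simp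
        also have "\<dots> = {..<Suc (length ds)}" unfolding ss lessThan_Suc by simp
        finally show ?thesis by simp
      qed
    qed
    have mp': "map (\<lambda>i. (ds @ [x]) ! i) s = xs"
    proof -
      have "map (\<lambda>i. (ds @ [x]) ! i) s = map (\<lambda>i. ds ! i) s"
        using ss by (intro map_cong refl) (auto simp: nth_append)
      then show ?thesis using mp by simp
    qed
    have m1: "map (\<lambda>i. (ds @ [x]) ! i) (s @ [length ds]) = xs @ [x]"
      using mp' by simp
    have s1: "set (s @ [length ds]) = {..<length (ds @ [x])}"
    proof -
      have "set (s @ [length ds]) = insert (length ds) (set s)" by simp
      also have "\<dots> = {..<Suc (length ds)}" unfolding ss lessThan_Suc ..
      finally show ?thesis by simp
    qed
    have s2: "set (ds @ [x]) = set (xs @ [x])" using st by auto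
    have d2: "distinct (ds @ [x])" using dist False by simp
    show ?thesis unfolding c fst_conv snd_conv using len m1 s1 s2 d2 po' by simp
  qed
qed

definition cs :: "nat list \<Rightarrow> nat list" where "cs xs = fst (cf xs)"
definition cds :: "nat list \<Rightarrow> nat list" where "cds xs = snd (cf xs)"

lemma cs_len: "length (cs xs) = length xs" using cf_inv[of xs] unfolding cs_def by simp
lemma cds_distinct: "distinct (cds xs)" using cf_inv[of xs] unfolding cds_def by simp
lemma cds_set: "set (cds xs) = set xs" using cf_inv[of xs] unfolding cds_def by simp
lemma cs_map: "map (\<lambda>i. cds xs ! i) (cs xs) = xs" using cf_inv[of xs] unfolding cs_def cds_def by simp
lemma cs_set: "set (cs xs) = {..<length (cds xs)}" using cf_inv[of xs] unfolding cs_def cds_def by simp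
lemma cs_prefix_ok: "prefix_ok (cs xs)" using cf_inv[of xs] unfolding cs_def by simp

lemma cds_len: "length (cds xs) = card (set (cs xs))" using cs_set[of xs] by simp

lemma cf_fiber:
  "distinct ds' \<Longrightarrow> length ds' = length (cds ys) \<Longrightarrow> cf (map (\<lambda>i. ds' ! i) (cs ys)) = (cs ys, ds')"
proof (induction ys arbitrary: ds' rule: rev_induct)
  case Nil then show ?case by (simp add: cs_def cds_def)
next
  case (snoc y ys)
  obtain s ds where sd: "cf ys = (s, ds)" by force
  have ss: "set s = {..<length ds}" using cs_set[of ys] sd unfolding cs_def cds_def by simp
  show ?case
  proof (cases "y \<in> set ds")
    case True
    have c: "cf (ys @ [y]) = (s @ [idx ds y], ds)" by (simp add: cf_snoc sd cstep_def True)
    have lt: "idx ds y < length ds" using True by (rule idx_lt)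
    have IH: "cf (map (\<lambda>i. ds' ! i) s) = (s, ds')"
      using snoc.IH[of ds'] snoc.prems c sd by (simp add: cs_def cds_def)
    have ln: "length ds' = length ds" using snoc.prems c by (simp add: cds_def)
    have inset: "ds' ! idx ds y \<in> set ds'" using lt ln by simp
    have "cf (map (\<lambda>i. ds' ! i) (s @ [idx ds y])) = cstep (s, ds') (ds' ! idx ds y)"
      by (simp add: cf_snoc IH)
    also have "\<dots> = (s @ [idx ds y], ds')"
      unfolding cstep_def using inset idx_nth[OF snoc.prems(1), of "idx ds y"] lt ln by simp
    finally show ?thesis using c by (simp add: cs_def)
  next
    case False
    have c: "cf (ys @ [y]) = (s @ [length ds], ds @ [y])" by (simp add: cf_snoc sd cstep_def False)
    have ln: "length ds' = Suc (length ds)" using snoc.prems c by (simp add: cds_def)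
    define d0 where "d0 = butlast ds'"
    define z where "z = last ds'"
    have ds': "ds' = d0 @ [z]" unfolding d0_def z_def using ln
      by (metis append_butlast_last_id list.size(3) nat.simps(3))
    have d0: "distinct d0" "length d0 = length ds" "z \<notin> set d0"
      using snoc.prems(1) ln ds' by auto
    have IH: "cf (map (\<lambda>i. d0 ! i) s) = (s, d0)"
      using snoc.IH[of d0] d0 sd by (simp add: cs_def cds_def)
    have m: "map (\<lambda>i. ds' ! i) s = map (\<lambda>i. d0 ! i) s"
      using ss d0(2) by (auto simp: ds' nth_append)
    have "cf (map (\<lambda>i. ds' ! i) (s @ [length ds])) = cstep (s, d0) z"
    proof -
      have "map (\<lambda>i. ds' ! i) (s @ [length ds]) = map (\<lambda>i. d0 ! i) s @ [z]"
        using m d0(2) by (simp add: ds' nth_append)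
      then show ?thesis by (simp only: cf_snoc IH)
    qed
    also have "\<dots> = (s @ [length ds], ds')"
      unfolding cstep_def using d0 ds' by simp
    finally show ?thesis using c by (simp add: cs_def)
  qed
qed

lemma cs_fiber: "distinct ds' \<Longrightarrow> length ds' = length (cds ys) \<Longrightarrow> cs (map (\<lambda>i. ds' ! i) (cs ys)) = cs ys"
  using cf_fiber unfolding cs_def by simp

lemma cds_fiber: "distinct ds' \<Longrightarrow> length ds' = length (cds ys) \<Longrightarrow> cds (map (\<lambda>i. ds' ! i) (cs ys)) = ds'"
  using cf_fiber unfolding cds_def by simp

definition dlists :: "nat \<Rightarrow> nat \<Rightarrow> nat list set" where
  "dlists k N = {xs. length xs = k \<and> distinct xs \<and> set xs \<subseteq> {..<N}}"

lemma finite_dlists[simp]: "finite (dlists k N)"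
  by (rule finite_subset[OF _ finite_lists_len[of k N]]) (auto simp: dlists_def lists_len_def)

lemma sum_decomp:
  "(\<Sum>xs\<in>lists_len L N. f xs) =
   (\<Sum>s\<in>cs ` lists_len L N. \<Sum>ds\<in>dlists (card (set s)) N. f (map (\<lambda>i. ds ! i) s))"
proof -
  have "(\<Sum>xs\<in>lists_len L N. f xs) = (\<Sum>s\<in>cs ` lists_len L N. \<Sum>xs\<in>{xs. xs \<in> lists_len L N \<and> cs xs = s}. f xs)"
    using sum.image_gen[OF finite_lists_len[of L N], of f cs] by simp
  also have "\<dots> = (\<Sum>s\<in>cs ` lists_len L N. \<Sum>ds\<in>dlists (card (set s)) N. f (map (\<lambda>i. ds ! i) s))"
  proof (rule sum.cong[OF refl])
    fix s assume "s \<in> cs ` lists_len L N"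
    then obtain ys where ys: "ys \<in> lists_len L N" and s: "s = cs ys" by auto
    show "(\<Sum>xs\<in>{xs. xs \<in> lists_len L N \<and> cs xs = s}. f xs) = (\<Sum>ds\<in>dlists (card (set s)) N. f (map (\<lambda>i. ds ! i) s))"
    proof (rule sum.reindex_bij_witness[of _ "\<lambda>ds. map (\<lambda>i. ds ! i) s" cds])
      fix ds assume ds: "ds \<in> dlists (card (set s)) N"
      then have d: "distinct ds" "length ds = length (cds ys)" using cds_len[of ys] s
        by (auto simp: dlists_def)
      show "cds (map (\<lambda>i. ds ! i) s) = ds" using cds_fiber[OF d] s by simp
      have "cs (map (\<lambda>i. ds ! i) s) = s" using cs_fiber[OF d] s by simp
      moreover have "map (\<lambda>i. ds ! i) s \<in> lists_len L N"
      proof -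
        have "length s = L" using ys s cs_len by (simp add: lists_len_def)
        moreover have "\<forall>i\<in>set s. ds ! i < N"
          using ds d cs_set[of ys] s by (auto simp: dlists_def subset_iff)
        ultimately show ?thesis by (auto simp: lists_len_def)
      qed
      ultimately show "map (\<lambda>i. ds ! i) s \<in> {xs. xs \<in> lists_len L N \<and> cs xs = s}" by simp
    next
      fix xs assume xs: "xs \<in> {xs. xs \<in> lists_len L N \<and> cs xs = s}"
      then show "map (\<lambda>i. cds xs ! i) s = xs" using cs_map[of xs] by simp
      then show "f (map (\<lambda>i. cds xs ! i) s) = f xs" by simp
      show "cds xs \<in> dlists (card (set s)) N"
        using xs cds_distinct[of xs] cds_set[of xs] cds_len[of xs]
        by (auto simp: dlists_def lists_len_def)
    qed
  qed
  finally show ?thesis .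
qed


lemma nth_in_take: "i < n \<Longrightarrow> i < length s \<Longrightarrow> s ! i \<in> set (take n s)"
  using nth_mem[of i "take n s"] by simp

lemma prefix_new:
  assumes po: "prefix_ok s" and k: "k < length s" and nw: "s ! k \<notin> set (take k s)"
    and y: "y \<in> set (take k s)"
  shows "y < s ! k"
proof -
  define A where "A = set (take k s)"
  have A: "A = {..<card A}" using po k unfolding prefix_ok_def A_def by simp
  have tk: "take (Suc k) s = take k s @ [s ! k]" using k by (rule take_Suc_conv_app_nth)
  have "set (take (Suc k) s) = insert (s ! k) A" unfolding A_def tk by simp
  moreover have "set (take (Suc k) s) = {..<card (set (take (Suc k) s))}"
    using po k unfolding prefix_ok_def by simp
  ultimately have B: "insert (s ! k) A = {..<card (insert (s ! k) A)}" by simp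
  have nA: "s ! k \<notin> A" using nw unfolding A_def .
  have fA: "finite A" unfolding A_def by simp
  have "card (insert (s ! k) A) = Suc (card A)" using nA fA by simp
  then have "s ! k < Suc (card A)" using B by (metis insertI1 lessThan_iff)
  moreover have "\<not> s ! k < card A" using nA A by (metis lessThan_iff)
  moreover have "y < card A" using y A unfolding A_def[symmetric] by (metis lessThan_iff)
  ultimately show ?thesis by simp
qed

lemma prefix_first:
  assumes po: "prefix_ok s" and L: "length s \<ge> 1"
  shows "s ! 0 = 0"
proof -
  have t: "take 1 s = [s ! 0]" using L by (cases s) auto
  have "set (take 1 s) = {..<card (set (take 1 s))}" using po L unfolding prefix_ok_def by simp
  then have "{s ! 0} = {..<1}" unfolding t by simp
  then show ?thesis by auto
qed

lemma ordp_eq: "ordp a b = ordp c d \<Longrightarrow> (a = c \<and> b = d) \<or> (a = d \<and> b = c)"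
  unfolding ordp_def by (auto simp: max_def min_def split: if_splits)

definition Tset :: "nat list \<Rightarrow> nat set" where
  "Tset s = {k. Suc k < length s \<and> s ! Suc k \<notin> set (take (Suc k) s)}"

lemma Tset_sub: "Tset s \<subseteq> {..<length s}" unfolding Tset_def by auto

lemma finite_Tset[simp]: "finite (Tset s)"
  using Tset_sub finite_subset by blast

lemma ed_T: "k \<in> Tset s \<Longrightarrow> ed s k = ordp (s ! k) (s ! Suc k)"
  unfolding Tset_def ed_def by simp

lemma Tinj_aux:
  assumes k1: "k1 \<in> Tset s" and k2: "k2 \<in> Tset s" and e: "ed s k1 = ed s k2" and lt: "k1 < k2"
  shows False
proof -
  have "ordp (s ! k1) (s ! Suc k1) = ordp (s ! k2) (s ! Suc k2)" using e ed_T[OF k1] ed_T[OF k2] by simp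
  then have "s ! Suc k2 = s ! k1 \<or> s ! Suc k2 = s ! Suc k1" using ordp_eq by metis
  moreover have "s ! k1 \<in> set (take (Suc k2) s)" using lt k2 unfolding Tset_def
    by (intro nth_in_take) auto
  moreover have "s ! Suc k1 \<in> set (take (Suc k2) s)" using lt k2 unfolding Tset_def
    by (intro nth_in_take) auto
  ultimately have "s ! Suc k2 \<in> set (take (Suc k2) s)" by auto
  then show False using k2 unfolding Tset_def by simp
qed

lemma Tinj: "k1 \<in> Tset s \<Longrightarrow> k2 \<in> Tset s \<Longrightarrow> ed s k1 = ed s k2 \<Longrightarrow> k1 = k2"
  using Tinj_aux[of k1 s k2] Tinj_aux[of k2 s k1] by (metis linorder_neqE_nat)

definition fi :: "nat list \<Rightarrow> nat \<Rightarrow> nat" where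
  "fi s j = (LEAST i. i < length s \<and> s ! i = j)"

definition par :: "nat list \<Rightarrow> nat \<Rightarrow> nat" where
  "par s j = s ! (fi s j - 1)"

lemma fi_T: assumes k: "k \<in> Tset s" shows "fi s (s ! Suc k) = Suc k"
  unfolding fi_def
proof (rule Least_equality)
  show "Suc k < length s \<and> s ! Suc k = s ! Suc k" using k unfolding Tset_def by simp
next
  fix i assume i: "i < length s \<and> s ! i = s ! Suc k"
  show "Suc k \<le> i"
  proof (rule ccontr)
    assume "\<not> Suc k \<le> i"
    then have "s ! i \<in> set (take (Suc k) s)" using i by (intro nth_in_take) auto
    then show False using i k unfolding Tset_def by simp
  qed
qed

lemma par_T: "k \<in> Tset s \<Longrightarrow> par s (s ! Suc k) = s ! k"
  unfolding par_def by (simp add: fi_T)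

lemma T_bij:
  assumes po: "prefix_ok s" and L: "length s \<ge> 1" and sm: "set s = {..<m}"
  shows "bij_betw (\<lambda>k. s ! Suc k) (Tset s) {1..<m}"
proof (rule bij_betwI')
  fix k1 k2 assume k1: "k1 \<in> Tset s" and k2: "k2 \<in> Tset s"
  show "(s ! Suc k1 = s ! Suc k2) = (k1 = k2)"
  proof
    assume "s ! Suc k1 = s ! Suc k2"
    then have "fi s (s ! Suc k1) = fi s (s ! Suc k2)" by (rule arg_cong)
    then show "k1 = k2" unfolding fi_T[OF k1] fi_T[OF k2] by simp
  qed simp
next
  fix k assume k: "k \<in> Tset s"
  then have sk: "Suc k < length s" unfolding Tset_def by simp
  have "s ! Suc k \<in> set s" using sk by simp
  then have "s ! Suc k \<in> {..<m}" by (simp only: sm)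
  then have "s ! Suc k < m" by simp
  moreover have "s ! Suc k \<noteq> 0"
  proof
    assume "s ! Suc k = 0"
    moreover have "s ! 0 \<in> set (take (Suc k) s)" using sk by (intro nth_in_take) auto
    ultimately show False using k prefix_first[OF po L] unfolding Tset_def by simp
  qed
  ultimately show "s ! Suc k \<in> {1..<m}" by simp
next
  fix j assume j: "j \<in> {1..<m}"
  then have "j \<in> {..<m}" by simp
  then have "j \<in> set s" by (simp only: sm)
  then obtain i0 where i0: "i0 < length s" "s ! i0 = j" by (auto simp: in_set_conv_nth)
  define i where "i = fi s j"
  have ip: "i < length s \<and> s ! i = j" unfolding i_def fi_def
    by (rule LeastI[of _ i0]) (use i0 in simp)
  have imin: "\<And>i'. i' < length s \<Longrightarrow> s ! i' = j \<Longrightarrow> i \<le> i'"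
    unfolding i_def fi_def by (rule Least_le) simp
  have "i \<noteq> 0"
  proof
    assume "i = 0"
    then have "j = 0" using ip prefix_first[OF po L] by simp
    then show False using j by simp
  qed
  then obtain k where k: "i = Suc k" by (cases i) auto
  have "k \<in> Tset s"
    unfolding Tset_def
  proof (intro CollectI conjI)
    show "Suc k < length s" using ip k by simp
    show "s ! Suc k \<notin> set (take (Suc k) s)"
    proof
      assume "s ! Suc k \<in> set (take (Suc k) s)"
      then obtain i' where "i' < length (take (Suc k) s)" "take (Suc k) s ! i' = s ! Suc k"
        by (auto simp: in_set_conv_nth)
      then have "i' < Suc k" "i' < length s" "s ! i' = j" using ip k by auto
      then show False using imin k by fastforce
    qed
  qed
  then show "\<exists>k\<in>Tset s. j = s ! Suc k" using ip k by auto
qed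

lemma card_Tset:
  assumes "prefix_ok s" "length s \<ge> 1" "set s = {..<m}"
  shows "card (Tset s) = m - 1"
  using bij_betw_same_card[OF T_bij[OF assms]] by simp

lemma par_lt:
  assumes po: "prefix_ok s" and L: "length s \<ge> 1" and sm: "set s = {..<m}" and j: "j \<in> {1..<m}"
  shows "par s j < j"
proof -
  have "j \<in> (\<lambda>k. s ! Suc k) ` Tset s"
    using T_bij[OF po L sm] j unfolding bij_betw_def by simp
  then obtain k where k: "k \<in> Tset s" "j = s ! Suc k" by blast
  have sk: "Suc k < length s" and nw: "s ! Suc k \<notin> set (take (Suc k) s)" using k unfolding Tset_def by auto
  have "s ! k \<in> set (take (Suc k) s)" using sk by (intro nth_in_take) auto
  then have "s ! k < s ! Suc k" using prefix_new[OF po sk nw] by blast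
  then show ?thesis using k par_T by simp
qed

lemma tree_reindex:
  assumes po: "prefix_ok s" and L: "length s \<ge> 1" and sm: "set s = {..<m}"
  shows "(\<Prod>k\<in>Tset s. h (s ! k) (s ! Suc k)) = (\<Prod>j\<in>{1..<m}. h (par s j) j)"
proof -
  have "(\<Prod>k\<in>Tset s. h (s ! k) (s ! Suc k)) = (\<Prod>k\<in>Tset s. (\<lambda>j. h (par s j) j) (s ! Suc k))"
    by (rule prod.cong) (auto simp: par_T)
  also have "\<dots> = (\<Prod>j\<in>{1..<m}. h (par s j) j)"
    by (rule prod.reindex_bij_betw[OF T_bij[OF po L sm]])
  finally show ?thesis .
qed

lemma cnt_sum: "(\<Sum>e\<in>ed s ` {..<length s}. cnt s e) = length s"
proof -
  have "length s = (\<Sum>t\<in>{..<length s}. (1::nat))" by simp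
  also have "\<dots> = (\<Sum>e\<in>ed s ` {..<length s}. \<Sum>t\<in>{t. t \<in> {..<length s} \<and> ed s t = e}. (1::nat))"
    by (rule sum.image_gen) simp
  also have "\<dots> = (\<Sum>e\<in>ed s ` {..<length s}. cnt s e)"
    unfolding cnt_def by (intro sum.cong refl) simp
  finally show ?thesis by simp
qed

lemma cnt_pos: "t < length s \<Longrightarrow> cnt s (ed s t) \<ge> 1"
  unfolding cnt_def
  by (metis (mono_tags, lifting) One_nat_def Suc_leI bounded_nat_set_is_finite card_gt_0_iff
      empty_iff mem_Collect_eq)

lemma Wt_even:
  assumes "Wt s \<noteq> 0" and "e \<in> ed s ` {..<length s}"
  shows "even (cnt s e)"
proof -
  have "mom (cnt s e) \<noteq> 0" using assms unfolding Wt_def by auto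
  then show ?thesis by (rule mom_nz_even)
qed

lemma Wt_m_bound:
  assumes po: "prefix_ok s" and L: "length s \<ge> 1" and sm: "set s = {..<m}" and W: "Wt s \<noteq> 0"
  shows "2 * (m - 1) \<le> length s"
proof -
  define E where "E = ed s ` {..<length s}"
  have two: "\<And>e. e \<in> E \<Longrightarrow> 2 \<le> cnt s e"
  proof -
    fix e assume e: "e \<in> E"
    then obtain t where t: "t < length s" "e = ed s t" unfolding E_def by auto
    have "1 \<le> cnt s e" using cnt_pos[OF t(1)] t by simp
    moreover have "even (cnt s e)" using Wt_even[OF W] e unfolding E_def by simp
    ultimately show "2 \<le> cnt s e" by presburger
  qed
  have "2 * card E = (\<Sum>e\<in>E. 2)" by simp
  also have "\<dots> \<le> (\<Sum>e\<in>E. cnt s e)" by (rule sum_mono) (rule two)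
  also have "\<dots> = length s" unfolding E_def by (rule cnt_sum)
  finally have cE: "2 * card E \<le> length s" .
  have "inj_on (ed s) (Tset s)" by (rule inj_onI) (rule Tinj)
  then have "card (ed s ` Tset s) = m - 1" using card_Tset[OF po L sm] by (simp add: card_image)
  moreover have "ed s ` Tset s \<subseteq> E" unfolding E_def using Tset_sub by auto
  ultimately have "m - 1 \<le> card E" unfolding E_def by (metis card_mono finite_imageI finite_lessThan)
  then show ?thesis using cE by simp
qed

lemma prod_superset_le:
  fixes f :: "nat \<Rightarrow> real"
  assumes "finite B" "A \<subseteq> B" "\<And>x. x \<in> B \<Longrightarrow> 0 \<le> f x \<and> f x \<le> 1"
  shows "prod f B \<le> prod f A"
proof -
  have fA: "finite A" using assms finite_subset by blast
  have "prod f B = prod f A * prod f (B - A)"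
    using assms by (metis prod.subset_diff mult.commute)
  also have "\<dots> \<le> prod f A * 1"
    using assms by (intro mult_left_mono prod_le_1 prod_nonneg) auto
  finally show ?thesis by simp
qed

lemma Bp_tree_gen:
  fixes c :: "nat \<Rightarrow> real"
  assumes W: "Wt s \<noteq> 0"
    and c1: "\<And>t. t < length s \<Longrightarrow> \<bar>c t\<bar> \<le> 1"
    and ceq: "\<And>t t'. t < length s \<Longrightarrow> t' < length s \<Longrightarrow> ed s t = ed s t' \<Longrightarrow> c t = c t'"
  shows "(\<Prod>t<length s. c t) \<le> (\<Prod>k\<in>Tset s. (c k)\<^sup>2)"
proof -
  let ?L = "length s"
  let ?T = "Tset s"
  have ex: "\<exists>k'. k' < ?L \<and> k' \<noteq> k \<and> ed s k' = ed s k" if k: "k \<in> ?T" for k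
  proof -
    have kL: "k < ?L" using k Tset_sub by auto
    define S where "S = {t. t < ?L \<and> ed s t = ed s k}"
    have "1 \<le> card S" using cnt_pos[OF kL] unfolding S_def cnt_def .
    moreover have "even (card S)" using Wt_even[OF W, of "ed s k"] kL unfolding S_def cnt_def by auto
    moreover have "card S \<noteq> 1" using \<open>even (card S)\<close> by (metis odd_one)
    ultimately have "2 \<le> card S" by linarith
    then have "\<not> S \<subseteq> {k}"
    proof (intro notI)
      assume "S \<subseteq> {k}"
      then have "card S \<le> card {k}" by (intro card_mono) auto
      then show False using \<open>2 \<le> card S\<close> by simp
    qed
    then show ?thesis unfolding S_def by auto
  qed
  define tau where "tau k = (SOME k'. k' < ?L \<and> k' \<noteq> k \<and> ed s k' = ed s k)" for k
  have tau: "tau k < ?L \<and> tau k \<noteq> k \<and> ed s (tau k) = ed s k" if "k \<in> ?T" for k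
    unfolding tau_def using someI_ex[OF ex[OF that]] .
  have tauT: "tau k \<notin> ?T" if k: "k \<in> ?T" for k
    using tau[OF k] Tinj[OF _ k] by blast
  have tinj: "inj_on tau ?T"
  proof (rule inj_onI)
    fix k1 k2 assume k1: "k1 \<in> ?T" and k2: "k2 \<in> ?T" and e: "tau k1 = tau k2"
    have "ed s k1 = ed s k2" using tau[OF k1] tau[OF k2] e by metis
    then show "k1 = k2" by (rule Tinj[OF k1 k2])
  qed
  have disj: "?T \<inter> tau ` ?T = {}" using tauT by auto
  have sub: "?T \<union> tau ` ?T \<subseteq> {..<?L}" using Tset_sub tau by auto
  have "(\<Prod>t<?L. c t) \<le> \<bar>\<Prod>t<?L. c t\<bar>" by simp
  also have "\<dots> = (\<Prod>t<?L. \<bar>c t\<bar>)" by (rule abs_prod)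
  also have "\<dots> \<le> (\<Prod>t\<in>?T \<union> tau ` ?T. \<bar>c t\<bar>)"
    by (rule prod_superset_le[OF _ sub]) (auto intro: c1)
  also have "\<dots> = (\<Prod>t\<in>?T. \<bar>c t\<bar>) * (\<Prod>t\<in>tau ` ?T. \<bar>c t\<bar>)"
    by (rule prod.union_disjoint) (use disj in auto)
  also have "(\<Prod>t\<in>tau ` ?T. \<bar>c t\<bar>) = (\<Prod>t\<in>?T. \<bar>c (tau t)\<bar>)"
    by (rule prod.reindex[OF tinj, unfolded comp_def])
  also have "\<dots> = (\<Prod>t\<in>?T. \<bar>c t\<bar>)"
  proof (rule prod.cong[OF refl])
    fix k assume k: "k \<in> ?T"
    have "k < ?L" using k Tset_sub by auto
    then show "\<bar>c (tau k)\<bar> = \<bar>c k\<bar>" using tau[OF k] ceq by metis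
  qed
  also have "(\<Prod>t\<in>?T. \<bar>c t\<bar>) * (\<Prod>t\<in>?T. \<bar>c t\<bar>) = (\<Prod>k\<in>?T. (c k)\<^sup>2)"
    by (simp add: prod.distrib[symmetric] power2_eq_square abs_mult_self_eq flip: abs_mult)
  finally show ?thesis .
qed

lemma peel:
  fixes b :: "nat \<Rightarrow> nat \<Rightarrow> real" and pa :: "nat \<Rightarrow> nat"
  assumes pa: "\<And>j. 1 \<le> j \<Longrightarrow> j < m \<Longrightarrow> pa j < j"
    and rs: "\<And>x. x < n \<Longrightarrow> (\<Sum>y<n. (b x y)\<^sup>2) \<le> \<sigma>\<^sup>2"
    and n: "n \<ge> 1"
  shows "(\<Sum>ds\<in>lists_len m n. \<Prod>j\<in>{1..<m}. (b (ds ! pa j) (ds ! j))\<^sup>2) \<le> real n * \<sigma> ^ (2 * (m - 1))"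
  using pa
proof (induction m)
  case 0
  have "lists_len 0 n = {[]}" unfolding lists_len_def by auto
  then show ?case using n by simp
next
  case (Suc m)
  show ?case
  proof (cases "m = 0")
    case True
    have "(\<Sum>ds\<in>lists_len 1 n. \<Prod>j\<in>{1..<1}. (b (ds ! pa j) (ds ! j))\<^sup>2) = real n"
    proof -
      have l0: "lists_len 0 n = {[]}" unfolding lists_len_def by auto
      have "(\<Sum>ds\<in>lists_len 1 n. (1::real)) = real n"
        using sum_lists_len_snoc[where k=0 and N=n and f="\<lambda>_. (1::real)"] l0 by simp
      then show ?thesis by simp
    qed
    then show ?thesis using True by simp
  next
    case False
    have IH: "(\<Sum>ds\<in>lists_len m n. \<Prod>j\<in>{1..<m}. (b (ds ! pa j) (ds ! j))\<^sup>2) \<le> real n * \<sigma> ^ (2 * (m - 1))"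
      using Suc.IH Suc.prems by auto
    have pam: "pa m < m" using Suc.prems False by simp
    have split: "{1..<Suc m} = insert m {1..<m}" using False by auto
    have "(\<Sum>ds\<in>lists_len (Suc m) n. \<Prod>j\<in>{1..<Suc m}. (b (ds ! pa j) (ds ! j))\<^sup>2)
        = (\<Sum>ds\<in>lists_len m n. \<Sum>x<n. \<Prod>j\<in>{1..<Suc m}. (b ((ds @ [x]) ! pa j) ((ds @ [x]) ! j))\<^sup>2)"
      by (rule sum_lists_len_snoc)
    also have "\<dots> = (\<Sum>ds\<in>lists_len m n. (\<Prod>j\<in>{1..<m}. (b (ds ! pa j) (ds ! j))\<^sup>2) * (\<Sum>x<n. (b (ds ! pa m) x)\<^sup>2))"
    proof (rule sum.cong[OF refl])
      fix ds assume ds: "ds \<in> lists_len m n"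
      then have ld: "length ds = m" unfolding lists_len_def by simp
      have "\<And>x. (\<Prod>j\<in>{1..<Suc m}. (b ((ds @ [x]) ! pa j) ((ds @ [x]) ! j))\<^sup>2)
          = (b (ds ! pa m) x)\<^sup>2 * (\<Prod>j\<in>{1..<m}. (b (ds ! pa j) (ds ! j))\<^sup>2)"
      proof -
        fix x
        have "(\<Prod>j\<in>{1..<Suc m}. (b ((ds @ [x]) ! pa j) ((ds @ [x]) ! j))\<^sup>2)
            = (b ((ds @ [x]) ! pa m) ((ds @ [x]) ! m))\<^sup>2 * (\<Prod>j\<in>{1..<m}. (b ((ds @ [x]) ! pa j) ((ds @ [x]) ! j))\<^sup>2)"
          unfolding split by (rule prod.insert) auto
        also have "(\<Prod>j\<in>{1..<m}. (b ((ds @ [x]) ! pa j) ((ds @ [x]) ! j))\<^sup>2) = (\<Prod>j\<in>{1..<m}. (b (ds ! pa j) (ds ! j))\<^sup>2)"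
        proof (rule prod.cong[OF refl])
          fix j assume j: "j \<in> {1..<m}"
          then have "pa j < m" using Suc.prems by fastforce
          then show "(b ((ds @ [x]) ! pa j) ((ds @ [x]) ! j))\<^sup>2 = (b (ds ! pa j) (ds ! j))\<^sup>2"
            using j ld by (simp add: nth_append)
        qed
        also have "(ds @ [x]) ! pa m = ds ! pa m" using pam ld by (simp add: nth_append)
        also have "(ds @ [x]) ! m = x" using ld nth_append_length[of ds x] by simp
        finally show "(\<Prod>j\<in>{1..<Suc m}. (b ((ds @ [x]) ! pa j) ((ds @ [x]) ! j))\<^sup>2)
          = (b (ds ! pa m) x)\<^sup>2 * (\<Prod>j\<in>{1..<m}. (b (ds ! pa j) (ds ! j))\<^sup>2)" .
      qed
      then show "(\<Sum>x<n. \<Prod>j\<in>{1..<Suc m}. (b ((ds @ [x]) ! pa j) ((ds @ [x]) ! j))\<^sup>2)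
          = (\<Prod>j\<in>{1..<m}. (b (ds ! pa j) (ds ! j))\<^sup>2) * (\<Sum>x<n. (b (ds ! pa m) x)\<^sup>2)"
        by (simp add: sum_distrib_left sum_distrib_right mult.commute)
    qed
    also have "\<dots> \<le> (\<Sum>ds\<in>lists_len m n. (\<Prod>j\<in>{1..<m}. (b (ds ! pa j) (ds ! j))\<^sup>2) * \<sigma>\<^sup>2)"
    proof (rule sum_mono)
      fix ds assume ds: "ds \<in> lists_len m n"
      have "ds ! pa m < n" using ds pam unfolding lists_len_def by (auto simp: subset_iff)
      then show "(\<Prod>j\<in>{1..<m}. (b (ds ! pa j) (ds ! j))\<^sup>2) * (\<Sum>x<n. (b (ds ! pa m) x)\<^sup>2)
          \<le> (\<Prod>j\<in>{1..<m}. (b (ds ! pa j) (ds ! j))\<^sup>2) * \<sigma>\<^sup>2"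
        by (intro mult_left_mono rs prod_nonneg) auto
    qed
    also have "\<dots> = (\<Sum>ds\<in>lists_len m n. \<Prod>j\<in>{1..<m}. (b (ds ! pa j) (ds ! j))\<^sup>2) * \<sigma>\<^sup>2"
      by (rule sum_distrib_right[symmetric])
    also have "\<dots> \<le> real n * \<sigma> ^ (2 * (m - 1)) * \<sigma>\<^sup>2"
      by (rule mult_right_mono[OF IH]) simp
    also have "\<dots> = real n * \<sigma> ^ (2 * (Suc m - 1))"
      using False by (cases m) (auto simp: power_add power2_eq_square mult_ac)
    finally show ?thesis .
  qed
qed


lemma suc_mod_lt: "t < (n::nat) \<Longrightarrow> Suc t mod n < n"
  by (rule mod_less_divisor) linarith

lemma psi_ordp: "ordp (ds ! fst (ordp a b)) (ds ! snd (ordp a b)) = ordp (ds ! a) (ds ! b)"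
  unfolding ordp_def by (auto simp: max_def min_def)

lemma Wt_map:
  assumes d: "distinct ds" and ss: "set s \<subseteq> {..<length ds}"
  shows "Wt (map (\<lambda>i. ds ! i) s) = Wt s"
proof -
  define psi where "psi e = ordp (ds ! fst e) (ds ! snd e)" for e
  define E where "E = ed s ` {..<length s}"
  let ?u = "map (\<lambda>i. ds ! i) s"
  have edu: "ed ?u t = psi (ed s t)" if "t < length s" for t
  proof -
    have "0 < length s" using that by linarith
    then have "Suc t mod length s < length s" by (rule mod_less_divisor)
    then show ?thesis using that unfolding ed_def psi_def by (simp add: psi_ordp)
  qed
  have inj: "inj_on psi E"
  proof (rule inj_onI)
    fix e1 e2 assume e1: "e1 \<in> E" and e2: "e2 \<in> E" and eq: "psi e1 = psi e2"
    obtain t1 where t1: "t1 < length s" "e1 = ed s t1" using e1 unfolding E_def by auto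
    obtain t2 where t2: "t2 < length s" "e2 = ed s t2" using e2 unfolding E_def by auto
    define a where "a = s ! t1"
    define b where "b = s ! (Suc t1 mod length s)"
    define c where "c = s ! t2"
    define d' where "d' = s ! (Suc t2 mod length s)"
    have inr: "a < length ds" "b < length ds" "c < length ds" "d' < length ds"
      unfolding a_def b_def c_def d'_def using t1 t2 ss
      by (auto simp: subset_iff intro!: nth_mem suc_mod_lt)
    have e1e: "e1 = ordp a b" using t1 unfolding ed_def a_def b_def by simp
    have e2e: "e2 = ordp c d'" using t2 unfolding ed_def c_def d'_def by simp
    have "ordp (ds ! a) (ds ! b) = ordp (ds ! c) (ds ! d')"
      using eq unfolding e1e e2e psi_def psi_ordp .
    then have "(ds ! a = ds ! c \<and> ds ! b = ds ! d') \<or> (ds ! a = ds ! d' \<and> ds ! b = ds ! c)"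
      by (rule ordp_eq)
    then have "(a = c \<and> b = d') \<or> (a = d' \<and> b = c)"
      using inr d by (simp add: nth_eq_iff_index_eq)
    then show "e1 = e2" unfolding e1e e2e using ordp_sym by metis
  qed
  have imgs: "ed ?u ` {..<length s} = psi ` E"
    unfolding E_def image_image by (intro image_cong refl) (simp add: edu)
  have cntu: "cnt ?u (psi e) = cnt s e" if e: "e \<in> E" for e
  proof -
    have "{t. t < length ?u \<and> ed ?u t = psi e} = {t. t < length s \<and> ed s t = e}"
    proof (intro Collect_cong iffI)
      fix t assume "t < length ?u \<and> ed ?u t = psi e"
      then have t: "t < length s" and "psi (ed s t) = psi e" using edu by auto
      moreover have "ed s t \<in> E" unfolding E_def using t by simp
      ultimately show "t < length s \<and> ed s t = e" using inj e by (auto dest: inj_onD)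
    next
      fix t assume "t < length s \<and> ed s t = e"
      then show "t < length ?u \<and> ed ?u t = psi e" using edu by auto
    qed
    then show ?thesis unfolding cnt_def by simp
  qed
  have "Wt ?u = (\<Prod>e'\<in>psi ` E. mom (cnt ?u e'))"
    unfolding Wt_def using imgs by simp
  also have "\<dots> = (\<Prod>e\<in>E. mom (cnt ?u (psi e)))"
    by (rule prod.reindex[OF inj, unfolded comp_def])
  also have "\<dots> = (\<Prod>e\<in>E. mom (cnt s e))"
    by (rule prod.cong) (auto simp: cntu)
  finally show ?thesis unfolding Wt_def E_def .
qed

lemma Bp_one: "Bp (\<lambda>_ _. 1) ys = 1"
  unfolding Bp_def by simp

lemma Wt_nonneg: "Wt s \<ge> 0"
  unfolding Wt_def by (intro prod_nonneg) (simp add: mom_nonneg)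

lemma canon_facts:
  fixes xs0 :: "nat list"
  defines "s \<equiv> cs xs0"
  shows "prefix_ok s" "set s = {..<card (set s)}" "length s = length xs0"
  unfolding s_def using cs_prefix_ok cs_set[of xs0] cds_len[of xs0] cs_len by auto

lemma classA:
  fixes b :: "nat \<Rightarrow> nat \<Rightarrow> real"
  assumes s: "s = cs xs0" and L: "length s \<ge> 1" and W: "Wt s \<noteq> 0"
    and b1: "\<And>i j. i < n \<Longrightarrow> j < n \<Longrightarrow> \<bar>b i j\<bar> \<le> 1"
    and bs: "\<And>i j. i < n \<Longrightarrow> j < n \<Longrightarrow> b i j = b j i"
    and rs: "\<And>x. x < n \<Longrightarrow> (\<Sum>y<n. (b x y)\<^sup>2) \<le> \<sigma>\<^sup>2"
    and n: "n \<ge> 1"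
  shows "(\<Sum>ds\<in>dlists (card (set s)) n. Bp b (map (\<lambda>i. ds ! i) s)) \<le> real n * \<sigma> ^ (2 * (card (set s) - 1))"
proof -
  define m where "m = card (set s)"
  have po: "prefix_ok s" and sm: "set s = {..<m}" using canon_facts[of xs0] s unfolding m_def by auto
  let ?L = "length s"
  let ?tp = "\<lambda>ds. \<Prod>j\<in>{1..<m}. (b (ds ! par s j) (ds ! j))\<^sup>2"
  have step: "Bp b (map (\<lambda>i. ds ! i) s) \<le> ?tp ds" if ds: "ds \<in> lists_len m n" for ds
  proof -
    have dn: "\<And>i. i \<in> set s \<Longrightarrow> ds ! i < n"
    proof -
      fix i assume "i \<in> set s"
      then have "i < m" using sm by blast
      then show "ds ! i < n" using ds unfolding lists_len_def by (auto simp: subset_iff)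
    qed
    define c where "c t = b (ds ! (s ! t)) (ds ! (s ! (Suc t mod ?L)))" for t
    have inS: "\<And>t. t < ?L \<Longrightarrow> s ! t \<in> set s" by simp
    have inS2: "\<And>t. t < ?L \<Longrightarrow> s ! (Suc t mod ?L) \<in> set s"
    proof -
      fix t assume "t < ?L"
      then have "0 < ?L" by linarith
      then have "Suc t mod ?L < ?L" by (rule mod_less_divisor)
      then show "s ! (Suc t mod ?L) \<in> set s" by (rule nth_mem)
    qed
    have "Bp b (map (\<lambda>i. ds ! i) s) = (\<Prod>t<?L. c t)"
      unfolding Bp_def c_def
    proof (rule prod.cong)
      show "{..<length (map (\<lambda>i. ds ! i) s)} = {..<?L}" by simp
    next
      fix x assume "x \<in> {..<?L}"
      then have x: "x < ?L" by simp
      then have x2: "Suc x mod ?L < ?L" by (rule suc_mod_lt)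
      show "b (map (\<lambda>i. ds ! i) s ! x) (map (\<lambda>i. ds ! i) s ! (Suc x mod length (map (\<lambda>i. ds ! i) s))) =
            b (ds ! (s ! x)) (ds ! (s ! (Suc x mod ?L)))"
        using x x2 by simp
    qed
    also have "\<dots> \<le> (\<Prod>k\<in>Tset s. (c k)\<^sup>2)"
    proof (rule Bp_tree_gen[OF W])
      fix t assume t: "t < ?L"
      show "\<bar>c t\<bar> \<le> 1" unfolding c_def by (rule b1) (use dn inS inS2 t in auto)
    next
      fix t t' assume t: "t < ?L" and t': "t' < ?L" and e: "ed s t = ed s t'"
      from e have "(s ! t = s ! t' \<and> s ! (Suc t mod ?L) = s ! (Suc t' mod ?L)) \<or>
                 (s ! t = s ! (Suc t' mod ?L) \<and> s ! (Suc t mod ?L) = s ! t')"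
        unfolding ed_def by (rule ordp_eq)
      then show "c t = c t'"
      proof
        assume "s ! t = s ! t' \<and> s ! (Suc t mod ?L) = s ! (Suc t' mod ?L)"
        then show ?thesis unfolding c_def by simp
      next
        assume h: "s ! t = s ! (Suc t' mod ?L) \<and> s ! (Suc t mod ?L) = s ! t'"
        have "c t = b (ds ! (s ! (Suc t' mod ?L))) (ds ! (s ! t'))" unfolding c_def using h by simp
        also have "\<dots> = b (ds ! (s ! t')) (ds ! (s ! (Suc t' mod ?L)))"
          by (rule bs) (use dn inS inS2 t' in auto)
        finally show ?thesis unfolding c_def .
      qed
    qed
    also have "\<dots> = (\<Prod>k\<in>Tset s. (b (ds ! (s ! k)) (ds ! (s ! Suc k)))\<^sup>2)"
    proof (rule prod.cong[OF refl])
      fix k assume "k \<in> Tset s"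
      then have "Suc k < ?L" unfolding Tset_def by simp
      then show "(c k)\<^sup>2 = (b (ds ! (s ! k)) (ds ! (s ! Suc k)))\<^sup>2" unfolding c_def by simp
    qed
    also have "\<dots> = ?tp ds"
      by (rule tree_reindex[OF po L sm, where h="\<lambda>a j. (b (ds ! a) (ds ! j))\<^sup>2"])
    finally show ?thesis .
  qed
  have "(\<Sum>ds\<in>dlists m n. Bp b (map (\<lambda>i. ds ! i) s)) \<le> (\<Sum>ds\<in>dlists m n. ?tp ds)"
    by (rule sum_mono) (rule step, auto simp: dlists_def lists_len_def)
  also have "\<dots> \<le> (\<Sum>ds\<in>lists_len m n. ?tp ds)"
    by (rule sum_mono2[OF finite_lists_len]) (auto simp: dlists_def lists_len_def intro!: prod_nonneg)
  also have "\<dots> \<le> real n * \<sigma> ^ (2 * (m - 1))"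
    by (rule peel[OF _ rs n]) (use par_lt[OF po L sm] in auto)
  finally show ?thesis unfolding m_def .
qed

lemma count_bound:
  fixes \<sigma> :: real
  assumes m1: "1 \<le> m" and mp: "m \<le> p + 1" and p: "p \<ge> 1"
  shows "real (nat \<lceil>\<sigma>\<^sup>2\<rceil> + p) * \<sigma> ^ (2 * (m - 1)) \<le> real (card (dlists m (nat \<lceil>\<sigma>\<^sup>2\<rceil> + p)))"
proof -
  define r where "r = nat \<lceil>\<sigma>\<^sup>2\<rceil> + p"
  have sr: "\<sigma>\<^sup>2 \<le> real (nat \<lceil>\<sigma>\<^sup>2\<rceil>)"
    by (metis le_of_int_ceiling of_nat_nat ceiling_le_zero not_le order_trans zero_le_power2
        of_int_0_le_iff)
  show ?thesis
  proof (cases "m \<le> r")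
    case False
    then have h: "nat \<lceil>\<sigma>\<^sup>2\<rceil> + p < m" unfolding r_def by simp
    then have "m = p + 1" using mp by linarith
    have "nat \<lceil>\<sigma>\<^sup>2\<rceil> = 0" using h mp by linarith
    then have "\<sigma>\<^sup>2 \<le> 0" using sr by (simp only: of_nat_0)
    then have "\<sigma> = 0" by simp
    have z: "(0::real) ^ (2 * (m - 1)) = 0" by (rule zero_power) (use \<open>m = p + 1\<close> p in simp)
    have "\<sigma> ^ (2 * (m - 1)) = 0" by (subst \<open>\<sigma> = 0\<close>) (rule z)
    then show ?thesis by (simp only: mult_zero_right of_nat_0_le_iff)
  next
    case True
    have card: "card (dlists m r) = \<Prod>{r - m + 1 .. r}"
      unfolding dlists_def using card_lists_distinct_length_eq[of "{..<r}" m] True by simp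
    have r1: "r \<ge> 1" unfolding r_def using p by simp
    have split: "{r - m + 1 .. r} = insert r {r - m + 1 ..< r}" using m1 True by auto
    have "real (card (dlists m r)) = real r * (\<Prod>i\<in>{r - m + 1 ..< r}. real i)"
      unfolding card split by (simp add: of_nat_prod)
    moreover have "\<sigma> ^ (2 * (m - 1)) \<le> (\<Prod>i\<in>{r - m + 1 ..< r}. real i)"
    proof -
      have "\<sigma> ^ (2 * (m - 1)) = (\<Prod>i\<in>{r - m + 1 ..< r}. \<sigma>\<^sup>2)"
        using m1 True by (simp add: power_mult)
      also have "\<dots> \<le> (\<Prod>i\<in>{r - m + 1 ..< r}. real i)"
      proof (rule prod_mono)
        fix i assume i: "i \<in> {r - m + 1 ..< r}"
        then have i1: "r - m + 1 \<le> i" by simp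
        have i2: "r - p \<le> r - m + 1" using mp True by arith
        have i3: "r - p = nat \<lceil>\<sigma>\<^sup>2\<rceil>" unfolding r_def by simp
        have "nat \<lceil>\<sigma>\<^sup>2\<rceil> \<le> i" using i1 i2 i3 by linarith
        then have "real (nat \<lceil>\<sigma>\<^sup>2\<rceil>) \<le> real i" by (rule of_nat_mono)
        then show "0 \<le> \<sigma>\<^sup>2 \<and> \<sigma>\<^sup>2 \<le> real i"
          by (intro conjI zero_le_power2 order_trans[OF sr])
      qed
      finally show ?thesis .
    qed
    ultimately show ?thesis unfolding r_def[symmetric]
      by (simp add: mult_left_mono)
  qed
qed


lemma dlists_empty: "r < m \<Longrightarrow> dlists m r = {}"
proof (rule ccontr)
  assume rm: "r < m" and "dlists m r \<noteq> {}"
  then obtain xs where xs: "length xs = m" "distinct xs" "set xs \<subseteq> {..<r}" unfolding dlists_def by auto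
  have "card (set xs) = m" using xs distinct_card by metis
  moreover have "card (set xs) \<le> r" using card_mono[OF _ xs(3)] by simp
  ultimately show False using rm by simp
qed

lemma canon_in_Cr:
  assumes s: "s = cs xs0" and len: "length s = L" and mr: "card (set s) \<le> r"
  shows "s \<in> cs ` lists_len L r"
proof -
  define m where "m = card (set s)"
  have sm: "set s = {..<m}" using canon_facts[of xs0] s unfolding m_def by simp
  have lm: "length [0..<m] = length (cds xs0)" using cds_len[of xs0] s unfolding m_def by simp
  have mp: "map (\<lambda>i. [0..<m] ! i) s = s"
  proof (rule map_idI)
    fix i assume "i \<in> set s"
    then have "i < m" using sm by blast
    then show "[0..<m] ! i = i" by simp
  qed
  have "cs (map (\<lambda>i. [0..<m] ! i) (cs xs0)) = cs xs0"
    by (rule cs_fiber) (use lm in simp_all)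
  then have cs_s: "cs s = s" using mp s by simp
  have "s \<in> lists_len L r"
    unfolding lists_len_def using len sm mr unfolding m_def[symmetric] by auto
  then show ?thesis using cs_s by (metis image_eqI)
qed

theorem proposition2p1:
  fixes n p :: nat and b :: "nat \<Rightarrow> nat \<Rightarrow> real" and \<sigma> \<sigma>star :: real
  assumes "n \<ge> 1"
    and "\<And>i j. i < n \<Longrightarrow> j < n \<Longrightarrow> b i j = b j i"
    and "\<sigma> = Max {sqrt (\<Sum>j<n. (b i j)\<^sup>2) | i. i < n}"
    and "\<sigma>star = Max {\<bar>b i j\<bar> | i j. i < n \<and> j < n}"
    and "\<sigma>star \<le> 1"
    and "p \<ge> 1"
  shows "(\<integral>g. mtrace (sym_gauss_mat n b g ^\<^sub>m (2 * p)) \<partial>gauss_family n)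
         \<le> real n / real (nat \<lceil>\<sigma>\<^sup>2\<rceil> + p) *
           (\<integral>g. mtrace (GOE_like (nat \<lceil>\<sigma>\<^sup>2\<rceil> + p) g ^\<^sub>m (2 * p))
              \<partial>gauss_family (nat \<lceil>\<sigma>\<^sup>2\<rceil> + p))"
proof -
  note n = assms(1) and bs = assms(2) and p = assms(6)
  define r where "r = nat \<lceil>\<sigma>\<^sup>2\<rceil> + p"
  have L1: "2 * p \<ge> 1" using p by simp
  have "r \<ge> 1" unfolding r_def using p by linarith
  then have r0: "real r > 0" by simp
  have rs: "\<And>x. x < n \<Longrightarrow> (\<Sum>y<n. (b x y)\<^sup>2) \<le> \<sigma>\<^sup>2"
  proof -
    fix x assume x: "x < n"
    have "sqrt (\<Sum>j<n. (b x j)\<^sup>2) \<in> {sqrt (\<Sum>j<n. (b i j)\<^sup>2) | i. i < n}" using x by blast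
    moreover have "finite {sqrt (\<Sum>j<n. (b i j)\<^sup>2) | i. i < n}" by simp
    ultimately have "sqrt (\<Sum>j<n. (b x j)\<^sup>2) \<le> \<sigma>" unfolding assms(3) by (rule Max_ge[rotated])
    moreover have "0 \<le> sqrt (\<Sum>j<n. (b x j)\<^sup>2)" by (intro real_sqrt_ge_zero sum_nonneg) simp
    ultimately have "(sqrt (\<Sum>j<n. (b x j)\<^sup>2))\<^sup>2 \<le> \<sigma>\<^sup>2" by (rule power_mono)
    moreover have "(sqrt (\<Sum>j<n. (b x j)\<^sup>2))\<^sup>2 = (\<Sum>j<n. (b x j)\<^sup>2)"
      by (intro real_sqrt_pow2 sum_nonneg) auto
    ultimately show "(\<Sum>y<n. (b x y)\<^sup>2) \<le> \<sigma>\<^sup>2" by simp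
  qed
  have b1: "\<And>i j. i < n \<Longrightarrow> j < n \<Longrightarrow> \<bar>b i j\<bar> \<le> 1"
  proof -
    fix i j assume ij: "i < n" "j < n"
    have "\<bar>b i j\<bar> \<in> {\<bar>b i j\<bar> | i j. i < n \<and> j < n}" using ij by blast
    moreover have "finite {\<bar>b i j\<bar> | i j. i < n \<and> j < n}" by (rule finite_image_set2) auto
    ultimately have "\<bar>b i j\<bar> \<le> \<sigma>star" unfolding assms(4) by (rule Max_ge[rotated])
    then show "\<bar>b i j\<bar> \<le> 1" using assms(5) by simp
  qed
  let ?Cn = "cs ` lists_len (2 * p) n"
  let ?Cr = "cs ` lists_len (2 * p) r"
  let ?G = "\<lambda>s. Wt s * real (card (dlists (card (set s)) r))"
  have Cfacts: "\<exists>xs0. s = cs xs0 \<and> length s = 2 * p" if "s \<in> cs ` lists_len (2 * p) N" for s N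
    using that cs_len by (auto simp: lists_len_def)
  have LHS: "(\<integral>g. mtrace (sym_gauss_mat n b g ^\<^sub>m (2 * p)) \<partial>gauss_family n)
      = (\<Sum>xs\<in>lists_len (2 * p) n. Bp b xs * Wt xs)"
    by (rule expectation_expand[OF L1 bs])
  have RHS: "(\<integral>g. mtrace (GOE_like r g ^\<^sub>m (2 * p)) \<partial>gauss_family r)
      = (\<Sum>ys\<in>lists_len (2 * p) r. Wt ys)"
    unfolding GOE_like_def using expectation_expand[OF L1, of r "\<lambda>_ _. 1"] by (simp add: Bp_one)
  have wmap: "Wt (map (\<lambda>i. ds ! i) s) = Wt s" if s: "s = cs xs0" and ds: "ds \<in> dlists (card (set s)) N" for s xs0 ds N
  proof (rule Wt_map)
    show "distinct ds" using ds unfolding dlists_def by simp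
    have "set s = {..<card (set s)}" using canon_facts[of xs0] s by simp
    then show "set s \<subseteq> {..<length ds}" using ds unfolding dlists_def by simp
  qed
  have "(\<Sum>xs\<in>lists_len (2 * p) n. Bp b xs * Wt xs)
      = (\<Sum>s\<in>?Cn. \<Sum>ds\<in>dlists (card (set s)) n. Bp b (map (\<lambda>i. ds ! i) s) * Wt (map (\<lambda>i. ds ! i) s))"
    by (rule sum_decomp)
  also have "\<dots> = (\<Sum>s\<in>?Cn. Wt s * (\<Sum>ds\<in>dlists (card (set s)) n. Bp b (map (\<lambda>i. ds ! i) s)))"
  proof (rule sum.cong[OF refl])
    fix s assume "s \<in> ?Cn"
    then obtain xs0 where s: "s = cs xs0" using Cfacts by blast
    have "(\<Sum>ds\<in>dlists (card (set s)) n. Bp b (map (\<lambda>i. ds ! i) s) * Wt (map (\<lambda>i. ds ! i) s))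
        = (\<Sum>ds\<in>dlists (card (set s)) n. Wt s * Bp b (map (\<lambda>i. ds ! i) s))"
      by (rule sum.cong[OF refl]) (simp add: wmap[OF s])
    then show "(\<Sum>ds\<in>dlists (card (set s)) n. Bp b (map (\<lambda>i. ds ! i) s) * Wt (map (\<lambda>i. ds ! i) s))
        = Wt s * (\<Sum>ds\<in>dlists (card (set s)) n. Bp b (map (\<lambda>i. ds ! i) s))"
      by (simp add: sum_distrib_left)
  qed
  also have "\<dots> \<le> (\<Sum>s\<in>?Cn. real n / real r * ?G s)"
  proof (rule sum_mono)
    fix s assume "s \<in> ?Cn"
    then obtain xs0 where s: "s = cs xs0" and len: "length s = 2 * p" using Cfacts by blast
    show "Wt s * (\<Sum>ds\<in>dlists (card (set s)) n. Bp b (map (\<lambda>i. ds ! i) s)) \<le> real n / real r * ?G s"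
    proof (cases "Wt s = 0")
      case True then show ?thesis by simp
    next
      case False
      define m where "m = card (set s)"
      have po: "prefix_ok s" and sm: "set s = {..<m}" using canon_facts[of xs0] s unfolding m_def by auto
      have Ls: "length s \<ge> 1" using len p by simp
      have "2 * (m - 1) \<le> 2 * p" using Wt_m_bound[OF po Ls sm False] len by simp
      then have mp: "m \<le> p + 1" by simp
      have m1: "1 \<le> m"
      proof (rule ccontr)
        assume "\<not> 1 \<le> m"
        then have "m = 0" by simp
        then have "set s = {}" using sm by (simp only: lessThan_0)
        then show False using Ls by simp
      qed
      have A: "(\<Sum>ds\<in>dlists m n. Bp b (map (\<lambda>i. ds ! i) s)) \<le> real n * \<sigma> ^ (2 * (m - 1))"
        using classA[OF s Ls False b1 bs rs n] unfolding m_def .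
      have C: "real r * \<sigma> ^ (2 * (m - 1)) \<le> real (card (dlists m r))"
        using count_bound[OF m1 mp p, of \<sigma>] unfolding r_def .
      have "real n * \<sigma> ^ (2 * (m - 1)) = real n / real r * (real r * \<sigma> ^ (2 * (m - 1)))"
        using r0 by simp
      also have "\<dots> \<le> real n / real r * real (card (dlists m r))"
        by (rule mult_left_mono[OF C]) simp
      finally have AC: "(\<Sum>ds\<in>dlists m n. Bp b (map (\<lambda>i. ds ! i) s)) \<le> real n / real r * real (card (dlists m r))"
        using A by linarith
      have "Wt s * (\<Sum>ds\<in>dlists m n. Bp b (map (\<lambda>i. ds ! i) s)) \<le> Wt s * (real n / real r * real (card (dlists m r)))"
        by (rule mult_left_mono[OF AC Wt_nonneg])
      then show ?thesis unfolding m_def by (simp add: mult_ac)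
    qed
  qed
  also have "\<dots> = real n / real r * (\<Sum>s\<in>?Cn. ?G s)"
    by (rule sum_distrib_left[symmetric])
  also have "real n / real r * (\<Sum>s\<in>?Cn. ?G s) \<le> real n / real r * (\<Sum>s\<in>?Cr. ?G s)"
  proof (rule mult_left_mono[rotated])
    show "0 \<le> real n / real r" by simp
  next
    have zero: "?G s = 0" if "s \<in> ?Cn - ?Cr" for s
    proof (rule ccontr)
      assume nz: "?G s \<noteq> 0"
      have sC: "s \<in> ?Cn" using that by (rule DiffD1)
      obtain xs0 where s: "s = cs xs0" and len: "length s = 2 * p" using Cfacts[OF sC] by blast
      have ne: "dlists (card (set s)) r \<noteq> {}"
      proof
        assume "dlists (card (set s)) r = {}"
        then have "?G s = 0" by simp
        then show False using nz by simp
      qed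
      have "card (set s) \<le> r"
      proof (rule ccontr)
        assume "\<not> card (set s) \<le> r"
        then have "r < card (set s)" by simp
        then have "dlists (card (set s)) r = {}" by (rule dlists_empty)
        then show False using ne by simp
      qed
      then have "s \<in> ?Cr" by (rule canon_in_Cr[OF s len])
      then show False using that by simp
    qed
    have "(\<Sum>s\<in>?Cn. ?G s) = (\<Sum>s\<in>?Cn \<inter> ?Cr. ?G s)"
    proof (rule sum.mono_neutral_right)
      show "finite ?Cn" by simp
      show "?Cn \<inter> ?Cr \<subseteq> ?Cn" by blast
      show "\<forall>s\<in>?Cn - ?Cn \<inter> ?Cr. ?G s = 0"
      proof
        fix s assume "s \<in> ?Cn - ?Cn \<inter> ?Cr"
        then have "s \<in> ?Cn - ?Cr" by blast
        then show "?G s = 0" by (rule zero)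
      qed
    qed
    also have "\<dots> \<le> (\<Sum>s\<in>?Cr. ?G s)"
      by (rule sum_mono2) (auto intro: mult_nonneg_nonneg Wt_nonneg)
    finally show "(\<Sum>s\<in>?Cn. ?G s) \<le> (\<Sum>s\<in>?Cr. ?G s)" .
  qed
  also have "(\<Sum>s\<in>?Cr. ?G s) = (\<Sum>ys\<in>lists_len (2 * p) r. Wt ys)"
  proof -
    have "(\<Sum>ys\<in>lists_len (2 * p) r. Wt ys)
        = (\<Sum>s\<in>?Cr. \<Sum>ds\<in>dlists (card (set s)) r. Wt (map (\<lambda>i. ds ! i) s))"
      by (rule sum_decomp)
    also have "\<dots> = (\<Sum>s\<in>?Cr. ?G s)"
    proof (rule sum.cong[OF refl])
      fix s assume "s \<in> ?Cr"
      then obtain xs0 where s: "s = cs xs0" using Cfacts by blast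
      have "(\<Sum>ds\<in>dlists (card (set s)) r. Wt (map (\<lambda>i. ds ! i) s)) = (\<Sum>ds\<in>dlists (card (set s)) r. Wt s)"
        by (rule sum.cong[OF refl]) (simp add: wmap[OF s])
      then show "(\<Sum>ds\<in>dlists (card (set s)) r. Wt (map (\<lambda>i. ds ! i) s)) = ?G s"
        by (simp add: mult.commute)
    qed
    finally show ?thesis by simp
  qed
  finally have main: "(\<Sum>xs\<in>lists_len (2 * p) n. Bp b xs * Wt xs) \<le> real n / real r * (\<Sum>ys\<in>lists_len (2 * p) r. Wt ys)"
    .
  show ?thesis
    unfolding LHS r_def[symmetric] RHS using main .
qed

end
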